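(* There exists a function $l:\mathbb{N}\to\mathbb{N}$ such that for every $m\in\mathbb{N}$, every graph $G$ and all tuples $\bar a,\bar b$ of vertices of $G$ of the same length: if $\bar a\not\cong_m\bar b$, then $\bar a\not\cong^D_{l(m)}\bar b$.
   Context: Graphs are finite, simple, undirected, loopless, possibly labelled with unary predicates. $N(u)$ is the neighbourhood of $u$ and $D(u,v):=N(u)\,\Delta\,N(v)$. $\bar a\cong_m\bar b$ means Duplicator wins the standard $m$-round Ehrenfeucht–Fraïssé game on $(G,\bar a)$ and $(G,\bar b)$ (equivalently, the tuples satisfy the same FO formulas of quantifier rank $m$). Differential game from $(\bar a,\bar b)$, $\bar a=(a_1,\dots,a_k)$, $\bar b=(b_1,\dots,b_k)$, on a single graph $G$: in each round, with current tuples $(a_1,\dots,a_n),(b_1,\dots,b_n)$, Spoiler chooses $i\le n$ and $v\in D(a_i,b_i)$ and declares whether $v$ becomes $a_{n+1}$ or $b_{n+1}$ (if all $D(a_i,b_i)$ are empty, Duplicator wins); Duplicator answers with a vertex $w\in D(a_i,b_i)$ (same $i$), which becomes the other of $b_{n+1},a_{n+1}$. After the rounds, Duplicator wins iff $a_i\mapsto b_i$ is a label-preserving isomorphism between the induced subgraphs on the $a$'s and $b$'s. $\bar a\cong^D_m\bar b$ means Duplicator has a winning strategy in the $m$-round differential game from $(\bar a,\bar b)$.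
   Formalization: In the differential game, when all $D(a_i,b_i)$ are empty the game stops and Duplicator wins only if $a_i\mapsto b_i$ is a label-preserving isomorphism between the induced subgraphs, instead of winning outright. The statement above fails without it. *)

theory Defs
  imports Main
begin

text \<open>Vertices are natural numbers
  (every finite graph is isomorphic to one of this form); labels are indexed by
  natural numbers: label G p v means that vertex v carries unary predicate p.\<close>

record lgraph =
  verts :: "nat set"
  edge  :: "nat \<Rightarrow> nat \<Rightarrow> bool"
  label :: "nat \<Rightarrow> nat \<Rightarrow> bool"

definition wf_graph :: "lgraph \<Rightarrow> bool" where
  "wf_graph G \<longleftrightarrow> finite (verts G)
     \<and> (\<forall>u v. edge G u v \<longrightarrow> u \<in> verts G \<and> v \<in> verts G)
     \<and> (\<forall>u v. edge G u v \<longrightarrow> edge G v u)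
     \<and> (\<forall>u. \<not> edge G u u)"

definition nbhd :: "lgraph \<Rightarrow> nat \<Rightarrow> nat set" where
  "nbhd G u = {w \<in> verts G. edge G u w}"

definition diffset :: "lgraph \<Rightarrow> nat \<Rightarrow> nat \<Rightarrow> nat set" where
  "diffset G u v = (nbhd G u - nbhd G v) \<union> (nbhd G v - nbhd G u)"

definition partial_iso :: "lgraph \<Rightarrow> nat list \<Rightarrow> nat list \<Rightarrow> bool" where
  "partial_iso G as bs \<longleftrightarrow> length as = length bs
     \<and> (\<forall>i < length as. \<forall>j < length as.
          (as ! i = as ! j \<longleftrightarrow> bs ! i = bs ! j)
          \<and> (edge G (as ! i) (as ! j) \<longleftrightarrow> edge G (bs ! i) (bs ! j)))
     \<and> (\<forall>i < length as. \<forall>p. label G p (as ! i) \<longleftrightarrow> label G p (bs ! i))"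

fun ef_equiv :: "lgraph \<Rightarrow> nat \<Rightarrow> nat list \<Rightarrow> nat list \<Rightarrow> bool" where
  "ef_equiv G 0 as bs = partial_iso G as bs"
| "ef_equiv G (Suc m) as bs =
     ((\<forall>v \<in> verts G. \<exists>w \<in> verts G. ef_equiv G m (as @ [v]) (bs @ [w]))
    \<and> (\<forall>w \<in> verts G. \<exists>v \<in> verts G. ef_equiv G m (as @ [v]) (bs @ [w])))"

text \<open>Duplicator wins the m-round differential game from (as,bs). If all
  difference sets are empty the game stops early and is judged by the final
  isomorphism condition.\<close>
fun diff_equiv :: "lgraph \<Rightarrow> nat \<Rightarrow> nat list \<Rightarrow> nat list \<Rightarrow> bool" where
  "diff_equiv G 0 as bs = partial_iso G as bs"
| "diff_equiv G (Suc m) as bs =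
     (partial_iso G as bs \<and>
      ((\<forall>i < length as. diffset G (as ! i) (bs ! i) = {})
       \<or> (\<forall>i < length as. \<forall>v \<in> diffset G (as ! i) (bs ! i).
            (\<exists>w \<in> diffset G (as ! i) (bs ! i). diff_equiv G m (as @ [v]) (bs @ [w]))
          \<and> (\<exists>w \<in> diffset G (as ! i) (bs ! i). diff_equiv G m (as @ [w]) (bs @ [v])))))"

end

theory Submission imports Defs begin

definition compat :: "lgraph \<Rightarrow> nat \<times> nat \<Rightarrow> nat \<times> nat \<Rightarrow> bool" where
  "compat G p q \<longleftrightarrow> (fst p = fst q \<longleftrightarrow> snd p = snd q) \<and> (edge G (fst p) (fst q) \<longleftrightarrow> edge G (snd p) (snd q))"

definition lab :: "lgraph \<Rightarrow> nat \<times> nat \<Rightarrow> bool" where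
  "lab G p \<longleftrightarrow> (\<forall>x. label G x (fst p) \<longleftrightarrow> label G x (snd p))"

definition piso_set :: "lgraph \<Rightarrow> (nat \<times> nat) set \<Rightarrow> bool" where
  "piso_set G Z \<longleftrightarrow> (\<forall>p\<in>Z. \<forall>q\<in>Z. compat G p q) \<and> (\<forall>p\<in>Z. lab G p)"

fun de :: "lgraph \<Rightarrow> nat \<Rightarrow> (nat \<times> nat) set \<Rightarrow> bool" where
  "de G 0 Z = piso_set G Z"
| "de G (Suc m) Z = (piso_set G Z \<and>
     (\<forall>(a,b)\<in>Z. \<forall>u\<in>diffset G a b. (\<exists>w\<in>diffset G a b. de G m (insert (u,w) Z))
        \<and> (\<exists>w\<in>diffset G a b. de G m (insert (w,u) Z))))"

lemma ball_zip:
  assumes "length xs = length ys"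
  shows "(\<forall>i<length xs. P (xs!i) (ys!i)) \<longleftrightarrow> (\<forall>(a,b)\<in>set (zip xs ys). P a b)"
  using assms by (auto simp: set_zip)

lemma ball_zip2:
  assumes "length xs = length ys"
  shows "(\<forall>p\<in>set (zip xs ys). P p) \<longleftrightarrow> (\<forall>i<length xs. P (xs!i, ys!i))"
  using assms by (auto simp: set_zip)

lemma piso_conv:
  "partial_iso G xs ys \<longleftrightarrow> length xs = length ys \<and> piso_set G (set (zip xs ys))"
proof (cases "length xs = length ys")
  case True
  show ?thesis
    unfolding partial_iso_def piso_set_def
    by (simp only: ball_zip2[OF True] True simp_thms compat_def lab_def fst_conv snd_conv)
next
  case False
  then show ?thesis unfolding partial_iso_def by simp
qed

lemma piso_mono: "piso_set G Z \<Longrightarrow> Z' \<subseteq> Z \<Longrightarrow> piso_set G Z'"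
  unfolding piso_set_def by blast

lemma de_conv:
  "length xs = length ys \<Longrightarrow> diff_equiv G m xs ys = de G m (set (zip xs ys))"
proof (induction m arbitrary: xs ys)
  case 0
  then show ?case by (simp add: piso_conv)
next
  case (Suc m)
  have IH: "\<And>u w. diff_equiv G m (xs@[u]) (ys@[w]) = de G m (insert (u,w) (set (zip xs ys)))"
    using Suc by simp
  define M where "M = (\<forall>i<length xs. \<forall>v\<in>diffset G (xs!i) (ys!i).
            (\<exists>w\<in>diffset G (xs!i) (ys!i). diff_equiv G m (xs@[v]) (ys@[w]))
          \<and> (\<exists>w\<in>diffset G (xs!i) (ys!i). diff_equiv G m (xs@[w]) (ys@[v])))"
  have imp: "(\<forall>i < length xs. diffset G (xs ! i) (ys ! i) = {}) \<Longrightarrow> M"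
    unfolding M_def by simp
  have alt: "diff_equiv G (Suc m) xs ys = (partial_iso G xs ys \<and> M)"
    unfolding diff_equiv.simps M_def[symmetric] using imp by blast
  have e: "M = (\<forall>(a,b)\<in>set (zip xs ys). \<forall>u\<in>diffset G a b. (\<exists>w\<in>diffset G a b. de G m (insert (u,w) (set (zip xs ys))))
        \<and> (\<exists>w\<in>diffset G a b. de G m (insert (w,u) (set (zip xs ys)))))"
    unfolding M_def IH by (simp only: ball_zip[OF Suc.prems, symmetric])
  show ?case unfolding alt de.simps e[symmetric] piso_conv using Suc.prems by simp
qed

lemma de_piso: "de G m Z \<Longrightarrow> piso_set G Z"
  by (cases m) auto

lemma de_SucE:
  assumes "de G (Suc m) Z" "(a,b) \<in> Z" "u \<in> diffset G a b"
  obtains w where "w \<in> diffset G a b" "de G m (insert (u,w) Z)"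
  using assms by fastforce

lemma de_SucE2:
  assumes "de G (Suc m) Z" "(a,b) \<in> Z" "u \<in> diffset G a b"
  obtains w where "w \<in> diffset G a b" "de G m (insert (w,u) Z)"
  using assms by fastforce

lemma de_SucI:
  assumes "piso_set G Z"
    and "\<And>a b u. (a,b) \<in> Z \<Longrightarrow> u \<in> diffset G a b \<Longrightarrow> \<exists>w\<in>diffset G a b. de G m (insert (u,w) Z)"
    and "\<And>a b u. (a,b) \<in> Z \<Longrightarrow> u \<in> diffset G a b \<Longrightarrow> \<exists>w\<in>diffset G a b. de G m (insert (w,u) Z)"
  shows "de G (Suc m) Z"
  using assms by auto

lemma de_mono_set: "de G m Z \<Longrightarrow> Z' \<subseteq> Z \<Longrightarrow> de G m Z'"
proof (induction m arbitrary: Z Z')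
  case 0
  then show ?case using piso_mono by simp
next
  case (Suc m)
  show ?case
  proof (rule de_SucI)
    show "piso_set G Z'" using Suc.prems de_piso piso_mono by blast
  next
    fix a b u assume ab: "(a,b) \<in> Z'" and u: "u \<in> diffset G a b"
    then have ab': "(a,b) \<in> Z" using Suc.prems by auto
    obtain w where w: "w \<in> diffset G a b" "de G m (insert (u,w) Z)"
      using de_SucE[OF Suc.prems(1) ab' u] .
    have "insert (u,w) Z' \<subseteq> insert (u,w) Z" using Suc.prems(2) by auto
    then show "\<exists>w\<in>diffset G a b. de G m (insert (u,w) Z')" using w Suc.IH by blast
  next
    fix a b u assume ab: "(a,b) \<in> Z'" and u: "u \<in> diffset G a b"
    then have ab': "(a,b) \<in> Z" using Suc.prems by auto
    obtain w where w: "w \<in> diffset G a b" "de G m (insert (w,u) Z)"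
      using de_SucE2[OF Suc.prems(1) ab' u] .
    have "insert (w,u) Z' \<subseteq> insert (w,u) Z" using Suc.prems(2) by auto
    then show "\<exists>w\<in>diffset G a b. de G m (insert (w,u) Z')" using w Suc.IH by blast
  qed
qed

lemma de_Suc_mono: "de G (Suc m) Z \<Longrightarrow> de G m Z"
proof (induction m arbitrary: Z)
  case 0
  then show ?case using de_piso by simp
next
  case (Suc m)
  show ?case
  proof (rule de_SucI)
    show "piso_set G Z" using Suc.prems de_piso by blast
  next
    fix a b u assume ab: "(a,b) \<in> Z" and u: "u \<in> diffset G a b"
    obtain w where w: "w \<in> diffset G a b" "de G (Suc m) (insert (u,w) Z)"
      using de_SucE[OF Suc.prems(1) ab u] .
    then show "\<exists>w\<in>diffset G a b. de G m (insert (u,w) Z)" using Suc.IH by blast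
  next
    fix a b u assume ab: "(a,b) \<in> Z" and u: "u \<in> diffset G a b"
    obtain w where w: "w \<in> diffset G a b" "de G (Suc m) (insert (w,u) Z)"
      using de_SucE2[OF Suc.prems(1) ab u] .
    then show "\<exists>w\<in>diffset G a b. de G m (insert (w,u) Z)" using Suc.IH by blast
  qed
qed

lemma de_mono: "de G m Z \<Longrightarrow> m' \<le> m \<Longrightarrow> de G m' Z"
proof (induction m)
  case 0
  then show ?case by simp
next
  case (Suc m)
  then show ?case using de_Suc_mono le_Suc_eq by blast
qed

lemma de_0: "de G 0 Z = piso_set G Z" by simp

declare de.simps[simp del]

lemma piso_insert:
  "piso_set G (insert p Z) \<longleftrightarrow> piso_set G Z \<and> compat G p p \<and> lab G p \<and> (\<forall>q\<in>Z. compat G p q \<and> compat G q p)"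
  unfolding piso_set_def by blast

lemma compat_refl: "wf_graph G \<Longrightarrow> compat G p p"
  unfolding compat_def wf_graph_def by simp

lemma edge_sym: "wf_graph G \<Longrightarrow> edge G x y = edge G y x"
  unfolding wf_graph_def by blast

lemma edge_irrefl: "wf_graph G \<Longrightarrow> \<not> edge G x x"
  unfolding wf_graph_def by blast

lemma edge_nbhd: "wf_graph G \<Longrightarrow> (y \<in> nbhd G x) = edge G x y"
  unfolding wf_graph_def nbhd_def by blast

lemma diffset_iff: "v \<in> diffset G a b \<longleftrightarrow> v \<in> verts G \<and> (edge G a v \<noteq> edge G b v)"
  unfolding diffset_def nbhd_def by blast

lemma diffset_verts: "diffset G a b \<subseteq> verts G"
  unfolding diffset_def nbhd_def by blast

lemma diffset_sym: "diffset G a b = diffset G b a"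
  unfolding diffset_def by blast

lemma twin_edge:
  assumes "wf_graph G" "nbhd G v = nbhd G v'"
  shows "edge G x v = edge G x v'"
proof -
  have "edge G x v = edge G v x" using edge_sym[OF assms(1)] by blast
  also have "\<dots> = (x \<in> nbhd G v)" using edge_nbhd[OF assms(1)] by blast
  also have "\<dots> = (x \<in> nbhd G v')" using assms(2) by simp
  also have "\<dots> = edge G v' x" using edge_nbhd[OF assms(1)] by blast
  also have "\<dots> = edge G x v'" using edge_sym[OF assms(1)] by blast
  finally show ?thesis .
qed

lemma twin_diffset_empty: "nbhd G v = nbhd G v' \<Longrightarrow> diffset G v v' = {}"
  unfolding diffset_def by simp

lemma nbhd_diff_nonempty: "nbhd G a \<noteq> nbhd G b \<Longrightarrow> diffset G a b \<noteq> {}"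
  unfolding diffset_def by blast

lemma twin_diffset:
  assumes "wf_graph G" "nbhd G v = nbhd G v'" "v \<in> verts G" "v' \<in> verts G"
  shows "(v \<in> diffset G a b) = (v' \<in> diffset G a b)"
  using twin_edge[OF assms(1,2)] assms(3,4) unfolding diffset_iff by metis

definition sw :: "(nat \<times> nat) set \<Rightarrow> (nat \<times> nat) set" where
  "sw Z = prod.swap ` Z"

lemma sw_mem: "(a,b) \<in> sw Z \<longleftrightarrow> (b,a) \<in> Z"
  unfolding sw_def by force

lemma sw_insert: "sw (insert (a,b) Z) = insert (b,a) (sw Z)"
  unfolding sw_def by simp

lemma compat_swap: "compat G (prod.swap p) (prod.swap q) = compat G p q"
  unfolding compat_def by auto

lemma lab_swap: "lab G (prod.swap p) = lab G p"
  unfolding lab_def by auto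

lemma piso_sw: "piso_set G Z \<Longrightarrow> piso_set G (sw Z)"
  unfolding piso_set_def sw_def using compat_swap lab_swap by simp

lemma de_sw: "de G m Z \<Longrightarrow> de G m (sw Z)"
proof (induction m arbitrary: Z)
  case 0
  then show ?case using piso_sw by (simp add: de_0)
next
  case (Suc m)
  show ?case
  proof (rule de_SucI)
    show "piso_set G (sw Z)" using Suc.prems de_piso piso_sw by blast
  next
    fix a b u assume ab: "(a,b) \<in> sw Z" and u: "u \<in> diffset G a b"
    have ab': "(b,a) \<in> Z" using ab sw_mem by blast
    have u': "u \<in> diffset G b a" using u diffset_sym by blast
    obtain w where w: "w \<in> diffset G b a" "de G m (insert (w,u) Z)"
      using de_SucE2[OF Suc.prems(1) ab' u'] .
    have "de G m (insert (u,w) (sw Z))" using Suc.IH[OF w(2)] sw_insert by metis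
    then show "\<exists>w\<in>diffset G a b. de G m (insert (u,w) (sw Z))" using w(1) diffset_sym by blast
  next
    fix a b u assume ab: "(a,b) \<in> sw Z" and u: "u \<in> diffset G a b"
    have ab': "(b,a) \<in> Z" using ab sw_mem by blast
    have u': "u \<in> diffset G b a" using u diffset_sym by blast
    obtain w where w: "w \<in> diffset G b a" "de G m (insert (u,w) Z)"
      using de_SucE[OF Suc.prems(1) ab' u'] .
    have "de G m (insert (w,u) (sw Z))" using Suc.IH[OF w(2)] sw_insert by metis
    then show "\<exists>w\<in>diffset G a b. de G m (insert (w,u) (sw Z))" using w(1) diffset_sym by blast
  qed
qed

lemma sw_sw: "sw (sw Z) = Z"
  unfolding sw_def by (auto simp: image_iff)

fun nr :: "lgraph \<Rightarrow> nat \<Rightarrow> nat \<Rightarrow> nat \<Rightarrow> (nat \<times> nat) set \<Rightarrow> bool" where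
  "nr G c v 0 Z = (\<forall>(a,b)\<in>Z. v \<notin> diffset G a b)"
| "nr G c v (Suc k) Z = ((\<forall>(a,b)\<in>Z. v \<notin> diffset G a b) \<and>
     (\<forall>(a,b)\<in>Z. \<forall>u\<in>diffset G a b. \<forall>w\<in>diffset G a b.
        de G (k+c) (insert (u,w) Z) \<longrightarrow> nr G c v k (insert (u,w) Z)))"

lemma nr0: "nr G c v k Z \<Longrightarrow> (a,b) \<in> Z \<Longrightarrow> v \<notin> diffset G a b"
  by (cases k) auto

lemma nr_step: "nr G c v (Suc k) Z \<Longrightarrow> (a,b) \<in> Z \<Longrightarrow> u \<in> diffset G a b \<Longrightarrow> w \<in> diffset G a b
   \<Longrightarrow> de G (k+c) (insert (u,w) Z) \<Longrightarrow> nr G c v k (insert (u,w) Z)"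
  unfolding nr.simps by blast

lemma not_nr_Suc:
  assumes "\<not> nr G c v (Suc k) Z" "\<forall>(a,b)\<in>Z. v \<notin> diffset G a b"
  obtains a b u w where "(a,b) \<in> Z" "u \<in> diffset G a b" "w \<in> diffset G a b"
      "de G (k + c) (insert (u,w) Z)" "\<not> nr G c v k (insert (u,w) Z)"
  using assms unfolding nr.simps by blast

declare nr.simps[simp del]

lemma lemH:
  "\<not> nr G (Suc c') v k Z \<Longrightarrow> de G (k + Suc c') Z \<Longrightarrow> \<exists>w\<in>verts G. de G c' (insert (v,w) Z)"
proof (induction k arbitrary: Z)
  case 0
  then obtain a b where ab: "(a,b) \<in> Z" "v \<in> diffset G a b" unfolding nr.simps by blast
  have "de G (Suc c') Z" using 0 by simp
  then obtain w where "w \<in> diffset G a b" "de G c' (insert (v,w) Z)"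
    using de_SucE ab by blast
  then show ?case using diffset_verts by blast
next
  case (Suc k)
  have d: "de G (Suc (k + Suc c')) Z" using Suc.prems(2) by simp
  show ?case
  proof (cases "\<exists>(a,b)\<in>Z. v \<in> diffset G a b")
    case True
    then obtain a b where ab: "(a,b) \<in> Z" "v \<in> diffset G a b" by blast
    then obtain w where w: "w \<in> diffset G a b" "de G (k + Suc c') (insert (v,w) Z)"
      using de_SucE d by blast
    have "de G c' (insert (v,w) Z)" using de_mono[OF w(2)] by simp
    then show ?thesis using diffset_verts w(1) by blast
  next
    case False
    then have F: "\<forall>(a,b)\<in>Z. v \<notin> diffset G a b" by blast
    obtain a b u w where abuw: "(a,b) \<in> Z" "u \<in> diffset G a b" "w \<in> diffset G a b"
      "de G (k + Suc c') (insert (u,w) Z)" "\<not> nr G (Suc c') v k (insert (u,w) Z)"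
      using not_nr_Suc[OF Suc.prems(1) F] by blast
    obtain w' where w': "w' \<in> verts G" "de G c' (insert (v,w') (insert (u,w) Z))"
      using Suc.IH[OF abuw(5) abuw(4)] by blast
    have "de G c' (insert (v,w') Z)" using de_mono_set[OF w'(2)] by blast
    then show ?thesis using w'(1) by blast
  qed
qed

lemma lemG:
  assumes wf: "wf_graph G" and vv: "v \<in> verts G" "v' \<in> verts G" and tw: "nbhd G v = nbhd G v'"
  shows "nr G c v k Z \<Longrightarrow> de G (k + c) Z \<Longrightarrow> piso_set G (insert (v,v') Z) \<Longrightarrow> de G k (insert (v,v') Z)"
proof (induction k arbitrary: Z)
  case 0
  then show ?case by (simp add: de_0)
next
  case (Suc k)
  have d: "de G (Suc (k + c)) Z" using Suc.prems(2) by simp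
  have key: "piso_set G (insert (v,v') (insert (u,w) Z)) \<and> nr G c v k (insert (u,w) Z)"
    if ab: "(a,b) \<in> Z" and u: "u \<in> diffset G a b" and w: "w \<in> diffset G a b"
      and dd: "de G (k+c) (insert (u,w) Z)" for a b u w
  proof
    show n: "nr G c v k (insert (u,w) Z)" using nr_step[OF Suc.prems(1) ab u w dd] .
    have v1: "v \<notin> diffset G a b" using nr0[OF Suc.prems(1) ab] .
    have v2: "v' \<notin> diffset G a b" using v1 twin_diffset[OF wf tw vv] by blast
    have v3: "v \<notin> diffset G u w" using nr0[OF n] by blast
    have "u \<noteq> v" "w \<noteq> v'" using u w v1 v2 by auto
    moreover have "edge G u v = edge G w v" using v3 vv(1) unfolding diffset_iff by blast
    moreover have "edge G w v = edge G w v'" using twin_edge[OF wf tw] by blast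
    ultimately have c1: "compat G (v,v') (u,w)" "compat G (u,w) (v,v')"
      unfolding compat_def using edge_sym[OF wf] by auto
    have p1: "piso_set G (insert (u,w) Z)" using de_piso[OF dd] .
    show "piso_set G (insert (v,v') (insert (u,w) Z))"
      using p1 Suc.prems(3) c1 unfolding piso_insert by blast
  qed
  show ?case
  proof (rule de_SucI)
    show "piso_set G (insert (v,v') Z)" using Suc.prems(3) .
  next
    fix a b u assume ab: "(a,b) \<in> insert (v,v') Z" and u: "u \<in> diffset G a b"
    have ab': "(a,b) \<in> Z" using ab u twin_diffset_empty[OF tw] by auto
    obtain w where w: "w \<in> diffset G a b" "de G (k+c) (insert (u,w) Z)"
      using de_SucE[OF d ab' u] .
    have "de G k (insert (v,v') (insert (u,w) Z))"
      using Suc.IH key[OF ab' u w(1) w(2)] w(2) by blast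
    then show "\<exists>w\<in>diffset G a b. de G k (insert (u,w) (insert (v,v') Z))"
      using w(1) insert_commute by metis
  next
    fix a b u assume ab: "(a,b) \<in> insert (v,v') Z" and u: "u \<in> diffset G a b"
    have ab': "(a,b) \<in> Z" using ab u twin_diffset_empty[OF tw] by auto
    obtain w where w: "w \<in> diffset G a b" "de G (k+c) (insert (w,u) Z)"
      using de_SucE2[OF d ab' u] .
    have "de G k (insert (v,v') (insert (w,u) Z))"
      using Suc.IH key[OF ab' w(1) u w(2)] w(2) by blast
    then show "\<exists>w\<in>diffset G a b. de G k (insert (w,u) (insert (v,v') Z))"
      using w(1) insert_commute by metis
  qed
qed

lemma closure:
  assumes wf: "wf_graph G" and v: "v \<in> verts G"
    and n: "nr G c v (Suc k) Z" and d: "de G (Suc (k + c)) Z" and ab: "(a,b) \<in> Z"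
  shows "(nbhd G a = nbhd G v) = (nbhd G b = nbhd G v)"
proof (rule ccontr)
  assume H: "(nbhd G a = nbhd G v) \<noteq> (nbhd G b = nbhd G v)"
  then have "nbhd G a \<noteq> nbhd G b" by blast
  then obtain x where x: "x \<in> diffset G a b" using nbhd_diff_nonempty by blast
  obtain w where w: "w \<in> diffset G a b" "de G (k+c) (insert (x,w) Z)"
    using de_SucE[OF d ab x] .
  have n': "nr G c v k (insert (x,w) Z)" using nr_step[OF n ab x w(1) w(2)] .
  have v3: "v \<notin> diffset G x w" using nr0[OF n'] by blast
  have p: "piso_set G (insert (x,w) Z)" using de_piso[OF w(2)] .
  have "compat G (x,w) (a,b)" using p ab unfolding piso_set_def by blast
  then have e1: "edge G x a = edge G w b" unfolding compat_def by simp
  have e2: "edge G a x \<noteq> edge G b x" "edge G a w \<noteq> edge G b w"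
    using x w(1) unfolding diffset_iff by auto
  have e3: "edge G x v = edge G w v" using v3 v unfolding diffset_iff by blast
  show False
  proof (cases "nbhd G a = nbhd G v")
    case True
    have "edge G x v = edge G x a" "edge G w v = edge G w a"
      using twin_edge[OF wf True] by auto
    then show False using e1 e2 e3 edge_sym[OF wf] by metis
  next
    case False
    then have T: "nbhd G b = nbhd G v" using H by blast
    have "edge G x v = edge G x b" "edge G w v = edge G w b"
      using twin_edge[OF wf T] by auto
    then show False using e1 e2 e3 edge_sym[OF wf] by metis
  qed
qed

lemma twin_partner:
  assumes fin: "finite Z" and p: "piso_set G Z"
    and nv: "v \<notin> fst ` Z" and vb: "v \<in> snd ` Z"
    and cl: "\<And>a b. (a,b) \<in> Z \<Longrightarrow> (nbhd G a = nbhd G v) = (nbhd G b = nbhd G v)"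
  shows "\<exists>u\<in>fst ` Z. u \<notin> snd ` Z \<and> nbhd G u = nbhd G v \<and> (\<forall>x. label G x u = label G x v)"
proof -
  define P where "P = (\<lambda>y. nbhd G y = nbhd G v \<and> (\<lambda>x. label G x y) = (\<lambda>x. label G x v))"
  have labeq: "(\<lambda>x. label G x a) = (\<lambda>x. label G x b)" if "(a,b) \<in> Z" for a b
    using p that unfolding piso_set_def lab_def by fastforce
  have PP: "P a = P b" if "(a,b) \<in> Z" for a b
    unfolding P_def using cl[OF that] labeq[OF that] by simp
  define S where "S = {p\<in>Z. P (fst p)}"
  have S2: "S = {p\<in>Z. P (snd p)}" unfolding S_def using PP by auto
  have finS: "finite S" using fin unfolding S_def by simp
  have injf: "inj_on fst S"
  proof (rule inj_onI)
    fix p q assume "p \<in> S" "q \<in> S" "fst p = fst q"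
    moreover have "compat G p q" using p \<open>p \<in> S\<close> \<open>q \<in> S\<close> unfolding S_def piso_set_def by blast
    ultimately show "p = q" unfolding compat_def by (simp add: prod_eq_iff)
  qed
  have injs: "inj_on snd S"
  proof (rule inj_onI)
    fix p q assume "p \<in> S" "q \<in> S" "snd p = snd q"
    moreover have "compat G p q" using p \<open>p \<in> S\<close> \<open>q \<in> S\<close> unfolding S_def piso_set_def by blast
    ultimately show "p = q" unfolding compat_def by (simp add: prod_eq_iff)
  qed
  have cardeq: "card (fst ` S) = card (snd ` S)"
    using card_image[OF injf] card_image[OF injs] by simp
  obtain q where q: "q \<in> Z" "snd q = v" using vb by blast
  have "P v" unfolding P_def by simp
  then have "q \<in> S" using q unfolding S2 by simp
  then have vB: "v \<in> snd ` S" using q by force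
  have vA: "v \<notin> fst ` S" using nv unfolding S_def by force
  have "\<not> fst ` S \<subseteq> snd ` S"
  proof
    assume "fst ` S \<subseteq> snd ` S"
    then have "fst ` S = snd ` S" using card_subset_eq[OF finite_imageI[OF finS]] cardeq by blast
    then show False using vA vB by blast
  qed
  then obtain u where u: "u \<in> fst ` S" "u \<notin> snd ` S" by blast
  have Pu: "P u" using u(1) unfolding S_def by force
  have "u \<notin> snd ` Z"
  proof
    assume "u \<in> snd ` Z"
    then obtain r where "r \<in> Z" "snd r = u" by blast
    then have "r \<in> S" using Pu unfolding S2 by simp
    then show False using u(2) \<open>snd r = u\<close> by force
  qed
  moreover have "u \<in> fst ` Z" using u(1) unfolding S_def by force
  ultimately show ?thesis using Pu unfolding P_def by metis
qed

lemma ext_step: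
  assumes wf: "wf_graph G" and fin: "finite Z" and fv: "fst ` Z \<subseteq> verts G" and sv: "snd ` Z \<subseteq> verts G"
    and d: "de G (Suc M + Suc M) Z" and v: "v \<in> verts G"
  shows "\<exists>w\<in>verts G. de G M (insert (v,w) Z)"
proof (cases "v \<in> fst ` Z")
  case True
  then obtain b where b: "(v,b) \<in> Z" by force
  then have "insert (v,b) Z = Z" by blast
  moreover have "de G M Z" using de_mono[OF d] by simp
  moreover have "b \<in> verts G" using sv b by force
  ultimately show ?thesis by metis
next
  case nA: False
  show ?thesis
  proof (cases "nr G (Suc M) v (Suc M) Z")
    case False
    then show ?thesis using lemH[OF False d] by blast
  next
    case n: True
    have p: "piso_set G Z" using de_piso[OF d] .
    have notD: "\<And>a b. (a,b) \<in> Z \<Longrightarrow> v \<notin> diffset G a b" using nr0[OF n] by blast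
    show ?thesis
    proof (cases "v \<in> snd ` Z")
      case False
      have c: "compat G (v,v) q \<and> compat G q (v,v)" if q: "q \<in> Z" for q
      proof -
        obtain a b where ab: "q = (a,b)" by force
        have "v \<noteq> a" "v \<noteq> b" using nA False q ab by force+
        moreover have "edge G a v = edge G b v" using notD[of a b] q ab v unfolding diffset_iff by blast
        ultimately show ?thesis unfolding compat_def ab using edge_sym[OF wf] by auto
      qed
      have pi: "piso_set G (insert (v,v) Z)"
        unfolding piso_insert using p c compat_refl[OF wf] unfolding lab_def by simp
      have "de G (Suc M) (insert (v,v) Z)" using lemG[OF wf v v refl n d pi] .
      then show ?thesis using de_mono[of G "Suc M" _ M] v by auto
    next
      case True
      have d': "de G (Suc (M + Suc M)) Z" using d by simp
      have cl: "\<And>a b. (a,b) \<in> Z \<Longrightarrow> (nbhd G a = nbhd G v) = (nbhd G b = nbhd G v)"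
        using closure[OF wf v n d'] by blast
      obtain u where u: "u \<in> fst ` Z" "u \<notin> snd ` Z" "nbhd G u = nbhd G v" "\<forall>x. label G x u = label G x v"
        using twin_partner[OF fin p nA True cl] by blast
      have uv: "u \<in> verts G" using u(1) fv by blast
      have c: "compat G (v,u) q \<and> compat G q (v,u)" if q: "q \<in> Z" for q
      proof -
        obtain a b where ab: "q = (a,b)" by force
        have "v \<noteq> a" "u \<noteq> b" using nA u(2) q ab by force+
        moreover have "edge G a v = edge G b v" using notD[of a b] q ab v unfolding diffset_iff by blast
        moreover have "edge G b v = edge G b u" using twin_edge[OF wf u(3)] by blast
        ultimately show ?thesis unfolding compat_def ab using edge_sym[OF wf] by auto
      qed
      have pi: "piso_set G (insert (v,u) Z)"
        unfolding piso_insert using p c compat_refl[OF wf] u(4) unfolding lab_def by simp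
      have "de G (Suc M) (insert (v,u) Z)" using lemG[OF wf v uv u(3)[symmetric] n d pi] .
      then show ?thesis using de_mono[of G "Suc M" _ M] uv by auto
    qed
  qed
qed

fun lf :: "nat \<Rightarrow> nat" where
  "lf 0 = 0"
| "lf (Suc m) = Suc (lf m) + Suc (lf m)"

lemma main:
  assumes wf: "wf_graph G"
  shows "length xs = length ys \<Longrightarrow> set xs \<subseteq> verts G \<Longrightarrow> set ys \<subseteq> verts G
    \<Longrightarrow> de G (lf m) (set (zip xs ys)) \<Longrightarrow> ef_equiv G m xs ys"
proof (induction m arbitrary: xs ys)
  case 0
  then show ?case using piso_conv by (simp add: de_0)
next
  case (Suc m)
  let ?Z = "set (zip xs ys)"
  have fin: "finite ?Z" by simp
  have fv: "fst ` ?Z \<subseteq> verts G" using Suc.prems(2) by (auto dest: set_zip_leftD)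
  have sv: "snd ` ?Z \<subseteq> verts G" using Suc.prems(3) by (auto dest: set_zip_rightD)
  have d: "de G (Suc (lf m) + Suc (lf m)) ?Z" using Suc.prems(4) by simp
  have A: "\<exists>w\<in>verts G. ef_equiv G m (xs @ [v]) (ys @ [w])" if v: "v \<in> verts G" for v
  proof -
    obtain w where w: "w \<in> verts G" "de G (lf m) (insert (v,w) ?Z)"
      using ext_step[OF wf fin fv sv d v] by blast
    have "ef_equiv G m (xs @ [v]) (ys @ [w])"
      using Suc.IH[of "xs @ [v]" "ys @ [w]"] Suc.prems w v by simp
    then show ?thesis using w(1) by blast
  qed
  have B: "\<exists>v\<in>verts G. ef_equiv G m (xs @ [v]) (ys @ [w])" if w: "w \<in> verts G" for w
  proof -
    have fv': "fst ` sw ?Z \<subseteq> verts G" using sv unfolding sw_def by force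
    have sv': "snd ` sw ?Z \<subseteq> verts G" using fv unfolding sw_def by force
    have fin': "finite (sw ?Z)" unfolding sw_def by simp
    obtain v where v: "v \<in> verts G" "de G (lf m) (insert (w,v) (sw ?Z))"
      using ext_step[OF wf fin' fv' sv' de_sw[OF d] w] by blast
    have "de G (lf m) (sw (insert (w,v) (sw ?Z)))" using de_sw[OF v(2)] .
    then have "de G (lf m) (insert (v,w) ?Z)" unfolding sw_insert sw_sw .
    then have "ef_equiv G m (xs @ [v]) (ys @ [w])"
      using Suc.IH[of "xs @ [v]" "ys @ [w]"] Suc.prems w v by simp
    then show ?thesis using v(1) by blast
  qed
  show ?case using A B by simp
qed

theorem lemma6p3:
  shows "\<exists>l :: nat \<Rightarrow> nat. \<forall>m G as bs.
           wf_graph G \<and> set as \<subseteq> verts G \<and> set bs \<subseteq> verts G \<and> length as = length bs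
           \<and> \<not> ef_equiv G m as bs \<longrightarrow> \<not> diff_equiv G (l m) as bs"
proof (intro exI allI impI)
  fix m G as bs
  assume H: "wf_graph G \<and> set as \<subseteq> verts G \<and> set bs \<subseteq> verts G \<and> length as = length bs
           \<and> \<not> ef_equiv G m as bs"
  show "\<not> diff_equiv G (lf m) as bs"
  proof
    assume "diff_equiv G (lf m) as bs"
    then have "de G (lf m) (set (zip as bs))" using de_conv H by blast
    then show False using main[of G as bs m] H by blast
  qed
qed

end
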